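(* Let $U\subseteq\mathbb{R}^m$ be a connected open set with coordinates $(f_1,\dots,f_m)$, and let $h_1,\dots,h_m:U\to(0,\infty)$ be differentiable functions satisfying $$\frac{\partial h_\alpha}{\partial f_\beta}=\delta_{\alpha\beta}h_\beta-h_\alpha h_\beta,\qquad \alpha,\beta\in\{1,\dots,m\}.$$ Then there exist real constants $\gamma,\sigma_1,\dots,\sigma_m$ such that, with $$\tilde F:=\log\Big(\gamma+\sum_{\alpha=1}^m e^{f_\alpha-\sigma_\alpha}\Big),$$ one has $h_\alpha=\partial\tilde F/\partial f_\alpha$ for all $\alpha=1,\dots,m$ on $U$.
   Context: $\delta_{\alpha\beta}$ denotes the Kronecker delta. The functions $h_\alpha$ play the role of generalized Gibbs weights depending on the variables $f_1,\dots,f_m$. *)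

theory Defs
  imports "HOL-Analysis.Analysis"
begin

definition has_partial_derivative ::
  "(real^'m \<Rightarrow> real) \<Rightarrow> 'm \<Rightarrow> real \<Rightarrow> real^'m \<Rightarrow> bool" where
  "has_partial_derivative f i D x \<longleftrightarrow>
     ((\<lambda>t. f (x + t *\<^sub>R axis i 1)) has_real_derivative D) (at 0)"

end

theory Submission
  imports Defs
begin

lemma deriv_form:
  fixes f :: "real^'m \<Rightarrow> real"
  assumes fd: "(f has_derivative D) (at x)" and pd: "\<And>\<beta>. has_partial_derivative f \<beta> (c \<beta>) x"
  shows "D = (\<lambda>v. \<Sum>\<beta>\<in>UNIV. v$\<beta> * c \<beta>)"
proof
  fix v :: "real^'m"
  have lin: "linear D" using fd by (rule has_derivative_linear)
  have Dax: "D (axis \<beta> 1) = c \<beta>" for \<beta>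
  proof -
    have g: "((\<lambda>t. x + t *\<^sub>R axis \<beta> 1) has_derivative (\<lambda>t. t *\<^sub>R axis \<beta> 1)) (at 0)"
      by (auto intro!: derivative_eq_intros)
    have fd0: "(f has_derivative D) (at (x + 0 *\<^sub>R axis \<beta> 1))" using fd by simp
    have "((\<lambda>t. f (x + t *\<^sub>R axis \<beta> 1)) has_derivative (\<lambda>t. D (t *\<^sub>R axis \<beta> 1))) (at 0)"
      using diff_chain_at[OF g fd0] by (simp add: o_def)
    moreover have "(\<lambda>t. D (t *\<^sub>R axis \<beta> 1)) = (*) (D (axis \<beta> 1))"
      using linear_scale[OF lin] by (auto simp: mult.commute)
    ultimately have "((\<lambda>t. f (x + t *\<^sub>R axis \<beta> 1)) has_real_derivative D (axis \<beta> 1)) (at 0)"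
      by (simp add: has_field_derivative_def)
    then show ?thesis using pd[of \<beta>] unfolding has_partial_derivative_def by (rule DERIV_unique)
  qed
  have "D v = D (\<Sum>i\<in>UNIV. v $ i *\<^sub>R axis i 1)"
    using basis_expansion[of v] by (simp add: scalar_mult_eq_scaleR)
  also have "\<dots> = (\<Sum>i\<in>UNIV. v $ i * D (axis i 1))"
    by (simp add: linear_sum[OF lin] linear_scale[OF lin])
  finally show "D v = (\<Sum>\<beta>\<in>UNIV. v$\<beta> * c \<beta>)" by (simp add: Dax)
qed

lemma const_lemma:
  fixes f :: "real^'m \<Rightarrow> real"
  assumes "open U" "connected U" "\<And>x. x \<in> U \<Longrightarrow> (f has_derivative (\<lambda>v. 0)) (at x)"
    "x \<in> U" "y \<in> U"
  shows "f x = f y"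
proof -
  have "continuous_on U f"
    using assms(3) by (meson continuous_at_imp_continuous_on has_derivative_continuous)
  then have "f constant_on U"
    using assms by (intro has_derivative_zero_connected_constant_on[where K="{}"])
      (auto intro: has_derivative_at_withinI)
  then show ?thesis using assms(4,5) unfolding constant_on_def by metis
qed

theorem proposition5p1:
  fixes U :: "(real^'m) set"
    and h :: "'m \<Rightarrow> real^'m \<Rightarrow> real"
  assumes "open U" and "connected U"
    and "\<And>\<alpha> x. x \<in> U \<Longrightarrow> h \<alpha> x > 0"
    and "\<And>\<alpha>. h \<alpha> differentiable_on U"
    and "\<And>\<alpha> \<beta> x. x \<in> U \<Longrightarrow>
           has_partial_derivative (h \<alpha>) \<beta>
             ((if \<alpha> = \<beta> then 1 else 0) * h \<beta> x - h \<alpha> x * h \<beta> x) x"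
  shows "\<exists>(\<gamma>::real) (\<sigma>::'m \<Rightarrow> real). \<forall>x\<in>U.
           0 < \<gamma> + (\<Sum>\<alpha>\<in>UNIV. exp (x $ \<alpha> - \<sigma> \<alpha>)) \<and>
           (\<forall>\<alpha>. has_partial_derivative
                   (\<lambda>y. ln (\<gamma> + (\<Sum>\<beta>\<in>UNIV. exp (y $ \<beta> - \<sigma> \<beta>)))) \<alpha> (h \<alpha> x) x)"
proof (cases "U = {}")
  case True
  then show ?thesis by auto
next
  case False
  then obtain x0 where x0: "x0 \<in> U" by auto
  define L where "L x v = (\<Sum>\<beta>\<in>UNIV. v$\<beta> * h \<beta> x)" for x v :: "real^'m"
  define S where "S x = (\<Sum>\<beta>\<in>UNIV. h \<beta> x)" for x :: "real^'m"
  define a0 where "a0 = (undefined :: 'm)"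
  have pos: "\<And>\<alpha> x. x \<in> U \<Longrightarrow> h \<alpha> x > 0" by fact
  have hd: "(h \<alpha> has_derivative (\<lambda>v. v$\<alpha> * h \<alpha> x - h \<alpha> x * L x v)) (at x)"
    if x: "x \<in> U" for \<alpha> x
  proof -
    have "h \<alpha> differentiable (at x)"
      using assms(4)[of \<alpha>] assms(1) x differentiable_on_eq_differentiable_at by blast
    then obtain D where D: "(h \<alpha> has_derivative D) (at x)" unfolding differentiable_def by blast
    have "D = (\<lambda>v. \<Sum>\<beta>\<in>UNIV. v$\<beta> * ((if \<alpha> = \<beta> then 1 else 0) * h \<beta> x - h \<alpha> x * h \<beta> x))"
      by (rule deriv_form[OF D assms(5)[OF x]])
    also have "\<dots> = (\<lambda>v. v$\<alpha> * h \<alpha> x - h \<alpha> x * L x v)"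
    proof
      fix v :: "real^'m"
      have "(\<Sum>\<beta>\<in>UNIV. v$\<beta> * ((if \<alpha> = \<beta> then 1 else 0) * h \<beta> x - h \<alpha> x * h \<beta> x))
         = (\<Sum>\<beta>\<in>UNIV. (if \<alpha> = \<beta> then v$\<beta> * h \<beta> x else 0)) - (\<Sum>\<beta>\<in>UNIV. h \<alpha> x * (v$\<beta> * h \<beta> x))"
        unfolding sum_subtractf[symmetric] by (rule sum.cong) (auto simp: algebra_simps)
      also have "\<dots> = v$\<alpha> * h \<alpha> x - h \<alpha> x * L x v"
        by (simp add: L_def sum_distrib_left)
      finally show "(\<Sum>\<beta>\<in>UNIV. v$\<beta> * ((if \<alpha> = \<beta> then 1 else 0) * h \<beta> x - h \<alpha> x * h \<beta> x))
         = v$\<alpha> * h \<alpha> x - h \<alpha> x * L x v" .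
    qed
    finally show ?thesis using D by simp
  qed
  define Q where "Q \<alpha> x = ln (h \<alpha> x) - ln (h a0 x) + x$a0 - x$\<alpha>" for \<alpha> x
  have Qd: "(Q \<alpha> has_derivative (\<lambda>v. 0)) (at x)" if x: "x \<in> U" for \<alpha> x
    unfolding Q_def[abs_def]
    apply (rule has_derivative_eq_rhs)
     apply (rule derivative_intros has_derivative_ln hd x pos bounded_linear.has_derivative[OF bounded_linear_vec_nth])+
    using pos[OF x, of \<alpha>] pos[OF x, of a0]
    apply (auto simp: fun_eq_iff field_simps)
    done

  define R where "R x = (1 - S x) * exp (x$a0 - ln (h a0 x))" for x
  have Rd: "(R has_derivative (\<lambda>v. 0)) (at x)" if x: "x \<in> U" for x
  proof -
    have sumeq: "(\<Sum>\<alpha>\<in>UNIV. v$\<alpha> * h \<alpha> x - L x v * h \<alpha> x) = L x v - (\<Sum>\<beta>\<in>UNIV. h \<beta> x) * L x v" for v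
    proof -
      have "(\<Sum>\<alpha>\<in>UNIV. L x v * h \<alpha> x) = (\<Sum>\<beta>\<in>UNIV. h \<beta> x) * L x v"
        by (simp add: sum_distrib_left[symmetric] mult.commute)
      then show ?thesis by (simp add: sum_subtractf L_def)
    qed
    show ?thesis
    unfolding R_def S_def[abs_def]
    apply (rule has_derivative_eq_rhs)
     apply (rule derivative_intros has_derivative_ln hd x pos bounded_linear.has_derivative[OF bounded_linear_vec_nth])+
    using pos[OF x, of a0]
    apply (simp add: fun_eq_iff mult.commute[of "h _ x" "L x _"] sumeq algebra_simps)
    done
  qed
  define q where "q \<alpha> = Q \<alpha> x0" for \<alpha>
  define r where "r = R x0"
  have Qc: "Q \<alpha> x = q \<alpha>" if "x \<in> U" for \<alpha> x
    unfolding q_def by (rule const_lemma[OF assms(1,2) Qd that x0])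
  have Rc: "R x = r" if "x \<in> U" for x
    unfolding r_def by (rule const_lemma[OF assms(1,2) Rd that x0])
  show ?thesis
  proof (intro exI ballI conjI allI)
    fix x assume x: "x \<in> U"
    define u where "u = h a0 x * exp (- x$a0)"
    have u: "u > 0" using pos[OF x] by (simp add: u_def)
    have e: "exp (x$\<alpha> - - q \<alpha>) = h \<alpha> x / u" for \<alpha>
    proof -
      have "exp (x$\<alpha> - - q \<alpha>) = exp (ln (h \<alpha> x) - ln (h a0 x) + x$a0)"
        using Qc[OF x, of \<alpha>] by (simp add: Q_def)
      also have "\<dots> = h \<alpha> x / u"
        using pos[OF x, of \<alpha>] pos[OF x, of a0]
        by (simp add: exp_add exp_diff u_def exp_minus field_simps)
      finally show ?thesis .
    qed
    have rr: "r = (1 - S x) / u"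
      using Rc[OF x] pos[OF x, of a0] by (simp add: R_def exp_diff u_def exp_minus field_simps)
    have den: "r + (\<Sum>\<alpha>\<in>UNIV. exp (x $ \<alpha> - - q \<alpha>)) = 1 / u"
      unfolding e rr using u by (simp add: S_def sum_divide_distrib[symmetric] field_simps)
    show "0 < r + (\<Sum>\<alpha>\<in>UNIV. exp (x $ \<alpha> - - q \<alpha>))" unfolding den using u by simp
    fix \<alpha>
    have eqf: "(\<lambda>t. ln (r + (\<Sum>\<beta>\<in>UNIV. exp ((x + t *\<^sub>R axis \<alpha> 1) $ \<beta> - - q \<beta>))))
      = (\<lambda>t. ln (r + (\<Sum>\<beta>\<in>UNIV. exp (x $ \<beta> + t * (if \<beta> = \<alpha> then 1 else 0) - - q \<beta>))))"
      by (simp add: axis_def)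
    have "((\<lambda>t. ln (r + (\<Sum>\<beta>\<in>UNIV. exp (x $ \<beta> + t * (if \<beta> = \<alpha> then 1 else 0) - - q \<beta>))))
       has_real_derivative (\<Sum>\<beta>\<in>UNIV. exp (x $ \<beta> - - q \<beta>) * (if \<beta> = \<alpha> then 1 else 0)) / (1/u)) (at 0)"
      using den u by (auto intro!: derivative_eq_intros)
    moreover have "(\<Sum>\<beta>\<in>UNIV. exp (x $ \<beta> - - q \<beta>) * (if \<beta> = \<alpha> then 1 else 0)) / (1/u) = h \<alpha> x"
      using u by (simp add: if_distrib[of "\<lambda>z. _ * z"] e[simplified] cong: if_cong)
    ultimately show "has_partial_derivative
       (\<lambda>y. ln (r + (\<Sum>\<beta>\<in>UNIV. exp (y $ \<beta> - - q \<beta>)))) \<alpha> (h \<alpha> x) x"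
      unfolding has_partial_derivative_def eqf by simp
  qed
qed
end
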